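(* Let $\Gamma$ be a regular inhomogeneous $Y$-semigroup and $(s,t) \in \Delta_J$. Assume that $A_\Gamma(u) \in \mathcal{B}(Y_1,Y)$ for all $u \in J$ and that $u \mapsto \|A_\Gamma(u)\|_{\mathcal{B}(Y_1,Y)}$ belongs to $L^1([s,t])$. Then for $f \in \mathcal{D}(A_\Gamma \in Y_1)$: \[ \Gamma(s,t)f=f+\int_s^tA_\Gamma(u)f\, du+\int_s^t \int_s^u \Gamma(s,r) A_\Gamma(r) A_\Gamma(u)f\, dr\, du . \] Assume in addition that (i) $A_\Gamma$ is $Y_1$-strongly continuous, and (ii) the maps $u \mapsto \Gamma(s,u) A_\Gamma^2(u)f$ and $u \mapsto \int_s^u \Gamma(s,r) A_\Gamma(r) A'_\Gamma(u)f\,dr$ are Bochner integrable on $[s,t]$. Then for $f \in \mathcal{D}(A_\Gamma')$: \[ \Gamma(s,t)f=f+\int_s^tA_\Gamma(u)f\, du+\int_s^t (t-u) \Gamma(s,u) A_\Gamma^2(u)f\,du+\int_s^t (t-u) \int_s^u \Gamma(s,r) A_\Gamma(r) A'_\Gamma(u)f\,dr\,du . \]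
   Context: Let $(Y,\|\cdot\|)$ be a real separable Banach space and $(Y_1,\|\cdot\|_{Y_1})$ a real separable Banach space continuously embedded in $Y$. $J$ is either $\mathbb{R}^+$ or $[0,T_\infty]$ ($T_\infty>0$), $\Delta_J=\{(s,t)\in J^2:s\le t\}$, $J(s)=\{t\in J:t\ge s\}$. An inhomogeneous $Y$-semigroup is a map $\Gamma:\Delta_J\to\mathcal B(Y)$ with $\Gamma(t,t)=I$ and $\Gamma(s,r)\Gamma(r,t)=\Gamma(s,t)$ for $s\le r\le t$. Generator: for $t\in J$, $\mathcal D(A_\Gamma(t))$ is the set of $f\in Y$ such that $\lim_{h\downarrow0,\,t+h\in J}h^{-1}(\Gamma(t,t+h)-I)f$ and $\lim_{h\downarrow0,\,t-h\in J}h^{-1}(\Gamma(t-h,t)-I)f$ exist in $Y$ and are equal, $A_\Gamma(t)f$ being the common value; $\mathcal D(A_\Gamma)=\bigcap_t\mathcal D(A_\Gamma(t))$. $\Gamma$ is regular if: $Y_1\subseteq\mathcal D(A_\Gamma)$; $\Gamma(s,t)Y_1\subseteq Y_1$ for all $(s,t)\in\Delta_J$ and for every $f\in Y_1$, $t\in J$, $u\mapsto\Gamma(u,t)f$ is $\|\cdot\|_{Y_1}$-continuous on $\{u\in J:u\le t\}$; for every $f\in Y$, $s\in J$, $u\mapsto\Gamma(s,u)f$ is continuous from $J(s)$ into $Y$; and for all $(s,t)\in\Delta_J$, $f\in Y_1$, $u\mapsto\Gamma(s,u)A_\Gamma(u)f$ is Bochner integrable on $[s,t]$. Define $\mathcal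 D(A_\Gamma\in Y_1)=\{f\in\mathcal D(A_\Gamma)\cap Y_1: A_\Gamma(t)f\in Y_1\ \forall t\in J\}$ and $\mathcal D(A'_\Gamma)$ the set of $f\in\mathcal D(A_\Gamma\in Y_1)$ such that for all $t\in J$ the limit $A'_\Gamma(t)f:=\lim_{h\to0,\,t+h\in J}h^{-1}(A_\Gamma(t+h)f-A_\Gamma(t)f)$ exists in the $\|\cdot\|_{Y_1}$-norm and lies in $Y_1$. $A_\Gamma$ is $Y_1$-strongly continuous means that $t\mapsto A_\Gamma(t)f$ is continuous from $J$ into $Y$ for every $f\in Y_1$; $A^2_\Gamma(u)=A_\Gamma(u)A_\Gamma(u)$. *)

theory Defs
  imports "HOL-Analysis.Analysis"
begin

text \<open>Y is modelled as a type 'y, Y1 as a type 'z together with an injective bounded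
linear map (continuous embedding) from 'z into 'y. Separability is encoded by the class
second_countable_topology (a normed space is separable iff second countable). Gamma is only relevant on Delta_J.\<close>

definition is_J :: "real set \<Rightarrow> bool" where
  "is_J J \<longleftrightarrow> J = {0..} \<or> (\<exists>T>0. J = {0..T})"

definition Delta :: "real set \<Rightarrow> (real \<times> real) set" where
  "Delta J = {(s, t). s \<in> J \<and> t \<in> J \<and> s \<le> t}"

definition inhom_semigroup ::
  "real set \<Rightarrow> (real \<Rightarrow> real \<Rightarrow> ('y::real_normed_vector \<Rightarrow>\<^sub>L 'y)) \<Rightarrow> bool" where
  "inhom_semigroup J G \<longleftrightarrow>
     (\<forall>t\<in>J. G t t = id_blinfun) \<and>
     (\<forall>s r t. s \<in> J \<and> r \<in> J \<and> t \<in> J \<and> s \<le> r \<and> r \<le> t \<longrightarrow> G s r o\<^sub>L G r t = G s t)"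

definition has_gen ::
  "real set \<Rightarrow> (real \<Rightarrow> real \<Rightarrow> ('y::real_normed_vector \<Rightarrow>\<^sub>L 'y)) \<Rightarrow> real \<Rightarrow> 'y \<Rightarrow> 'y \<Rightarrow> bool" where
  "has_gen J G t f g \<longleftrightarrow>
     ((\<lambda>h. (1 / h) *\<^sub>R (blinfun_apply (G t (t + h)) f - f)) \<longlongrightarrow> g)
        (at 0 within {h. 0 < h \<and> t + h \<in> J}) \<and>
     ((\<lambda>h. (1 / h) *\<^sub>R (blinfun_apply (G (t - h) t) f - f)) \<longlongrightarrow> g)
        (at 0 within {h. 0 < h \<and> t - h \<in> J})"

definition gen_dom ::
  "real set \<Rightarrow> (real \<Rightarrow> real \<Rightarrow> ('y::real_normed_vector \<Rightarrow>\<^sub>L 'y)) \<Rightarrow> real \<Rightarrow> 'y \<Rightarrow> bool" where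
  "gen_dom J G t f \<longleftrightarrow> (\<exists>g. has_gen J G t f g)"

definition gen ::
  "real set \<Rightarrow> (real \<Rightarrow> real \<Rightarrow> ('y::real_normed_vector \<Rightarrow>\<^sub>L 'y)) \<Rightarrow> real \<Rightarrow> 'y \<Rightarrow> 'y" where
  "gen J G t f = (THE g. has_gen J G t f g)"

definition regular ::
  "real set \<Rightarrow> (real \<Rightarrow> real \<Rightarrow> ('y::{banach,second_countable_topology} \<Rightarrow>\<^sub>L 'y))
     \<Rightarrow> ('z::real_normed_vector \<Rightarrow>\<^sub>L 'y) \<Rightarrow> bool" where
  "regular J G \<iota> \<longleftrightarrow>
     (\<forall>t\<in>J. \<forall>z. gen_dom J G t (blinfun_apply \<iota> z)) \<and>
     (\<forall>(s, t)\<in>Delta J. \<forall>z. blinfun_apply (G s t) (blinfun_apply \<iota> z) \<in> range (blinfun_apply \<iota>)) \<and>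
     (\<forall>t\<in>J. \<forall>z. continuous_on {u\<in>J. u \<le> t}
         (\<lambda>u. inv (blinfun_apply \<iota>) (blinfun_apply (G u t) (blinfun_apply \<iota> z)))) \<and>
     (\<forall>s\<in>J. \<forall>f. continuous_on {u\<in>J. s \<le> u} (\<lambda>u. blinfun_apply (G s u) f)) \<and>
     (\<forall>(s, t)\<in>Delta J. \<forall>z. set_integrable lborel {s..t}
         (\<lambda>u. blinfun_apply (G s u) (gen J G u (blinfun_apply \<iota> z))))"

definition dom_AY1 ::
  "real set \<Rightarrow> (real \<Rightarrow> real \<Rightarrow> ('y::real_normed_vector \<Rightarrow>\<^sub>L 'y)) \<Rightarrow> ('z::real_normed_vector \<Rightarrow>\<^sub>L 'y) \<Rightarrow> 'y set" where
  "dom_AY1 J G \<iota> = {f. f \<in> range (blinfun_apply \<iota>) \<and>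
      (\<forall>t\<in>J. gen_dom J G t f \<and> gen J G t f \<in> range (blinfun_apply \<iota>))}"

definition has_gen_deriv ::
  "real set \<Rightarrow> (real \<Rightarrow> real \<Rightarrow> ('y::real_normed_vector \<Rightarrow>\<^sub>L 'y)) \<Rightarrow> ('z::real_normed_vector \<Rightarrow>\<^sub>L 'y)
     \<Rightarrow> real \<Rightarrow> 'y \<Rightarrow> 'z \<Rightarrow> bool" where
  "has_gen_deriv J G \<iota> t f g' \<longleftrightarrow>
     ((\<lambda>h. (1 / h) *\<^sub>R (inv (blinfun_apply \<iota>) (gen J G (t + h) f) - inv (blinfun_apply \<iota>) (gen J G t f)))
        \<longlongrightarrow> g') (at 0 within {h. t + h \<in> J})"

definition dom_A' ::
  "real set \<Rightarrow> (real \<Rightarrow> real \<Rightarrow> ('y::real_normed_vector \<Rightarrow>\<^sub>L 'y)) \<Rightarrow> ('z::real_normed_vector \<Rightarrow>\<^sub>L 'y) \<Rightarrow> 'y set" where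
  "dom_A' J G \<iota> = {f \<in> dom_AY1 J G \<iota>. \<forall>t\<in>J. \<exists>g'. has_gen_deriv J G \<iota> t f g'}"

definition gen' ::
  "real set \<Rightarrow> (real \<Rightarrow> real \<Rightarrow> ('y::real_normed_vector \<Rightarrow>\<^sub>L 'y)) \<Rightarrow> ('z::real_normed_vector \<Rightarrow>\<^sub>L 'y)
     \<Rightarrow> real \<Rightarrow> 'y \<Rightarrow> 'y" where
  "gen' J G \<iota> t f = blinfun_apply \<iota> (THE g'. has_gen_deriv J G \<iota> t f g')"

end

theory Submission
  imports Defs "HOL-Analysis.Analysis"
begin

lemma tri3: "norm ((a::'a::real_normed_vector) - d) \<le> norm (a - b) + norm (b - c) + norm (c - d)"
  by (meson norm_diff_triangle_le order_refl)

lemma hk_approx: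
  fixes f :: "real \<Rightarrow> 'y::real_normed_vector"
  assumes H: "\<And>e. e > 0 \<Longrightarrow> \<exists>g yg h r. (g has_integral yg) {a..b} \<and> (h has_integral r) {a..b}
      \<and> r < e \<and> (\<forall>x\<in>{a..b}. norm (f x - g x) \<le> h x) \<and> norm (yg - y) < e"
  shows "(f has_integral y) {a..b}"
  unfolding has_integral_real
proof (intro allI impI)
  fix \<epsilon> :: real assume "\<epsilon> > 0"
  then obtain g yg h r where g: "(g has_integral yg) {a..b}" and h: "(h has_integral r) {a..b}"
    and r: "r < \<epsilon>/4" and fg: "\<forall>x\<in>{a..b}. norm (f x - g x) \<le> h x" and yg: "norm (yg - y) < \<epsilon>/4"
    using H[of "\<epsilon>/4"] by auto
  obtain \<gamma>1 where \<gamma>1: "gauge \<gamma>1" "\<And>D. D tagged_division_of {a..b} \<Longrightarrow> \<gamma>1 fine D \<Longrightarrow>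
      norm ((\<Sum>(x,k)\<in>D. measure lborel k *\<^sub>R g x) - yg) < \<epsilon>/4"
    using g[unfolded has_integral_real] \<open>\<epsilon>>0\<close> by (meson divide_pos_pos zero_less_numeral)
  obtain \<gamma>2 where \<gamma>2: "gauge \<gamma>2" "\<And>D. D tagged_division_of {a..b} \<Longrightarrow> \<gamma>2 fine D \<Longrightarrow>
      norm ((\<Sum>(x,k)\<in>D. measure lborel k *\<^sub>R h x) - r) < \<epsilon>/4"
    using h[unfolded has_integral_real] \<open>\<epsilon>>0\<close> by (meson divide_pos_pos zero_less_numeral)
  show "\<exists>\<gamma>. gauge \<gamma> \<and> (\<forall>\<D>. \<D> tagged_division_of {a..b} \<and> \<gamma> fine \<D> \<longrightarrow>
          norm ((\<Sum>(x, k)\<in>\<D>. measure lborel k *\<^sub>R f x) - y) < \<epsilon>)"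
  proof (intro exI conjI allI impI)
    show "gauge (\<lambda>x. \<gamma>1 x \<inter> \<gamma>2 x)" using \<gamma>1 \<gamma>2 by (simp add: gauge_Int)
    fix D assume D: "D tagged_division_of {a..b} \<and> (\<lambda>x. \<gamma>1 x \<inter> \<gamma>2 x) fine D"
    then have D1: "\<gamma>1 fine D" and D2: "\<gamma>2 fine D" and Dd: "D tagged_division_of {a..b}"
      by (auto simp: fine_Int)
    have fin: "finite D" using Dd by blast
    have tag: "\<And>x k. (x,k) \<in> D \<Longrightarrow> x \<in> {a..b}" using Dd by (meson tag_in_interval)
    have "norm ((\<Sum>(x,k)\<in>D. measure lborel k *\<^sub>R f x) - (\<Sum>(x,k)\<in>D. measure lborel k *\<^sub>R g x))
        = norm (\<Sum>(x,k)\<in>D. measure lborel k *\<^sub>R (f x - g x))"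
      by (simp add: sum_subtractf[symmetric] split_def scaleR_diff_right)
    also have "\<dots> \<le> (\<Sum>(x,k)\<in>D. norm (measure lborel k *\<^sub>R (f x - g x)))"
      by (rule norm_sum[THEN order_trans]) (simp add: split_def)
    also have "\<dots> \<le> (\<Sum>(x,k)\<in>D. measure lborel k *\<^sub>R h x)"
      by (rule sum_mono) (auto simp: split_def intro!: mult_left_mono fg[rule_format] dest: tag)
    also have "\<dots> < r + \<epsilon>/4"
    proof -
      have "norm ((\<Sum>(x,k)\<in>D. measure lborel k *\<^sub>R h x) - r) < \<epsilon>/4" using \<gamma>2(2)[OF Dd D2] .
      moreover have "\<And>S::real. norm (S - r) < \<epsilon>/4 \<Longrightarrow> S < r + \<epsilon>/4" by (smt (verit) real_norm_def)
      ultimately show ?thesis by blast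
    qed
    finally have 1: "norm ((\<Sum>(x,k)\<in>D. measure lborel k *\<^sub>R f x) - (\<Sum>(x,k)\<in>D. measure lborel k *\<^sub>R g x)) < r + \<epsilon>/4" .
    have 2: "norm ((\<Sum>(x,k)\<in>D. measure lborel k *\<^sub>R g x) - yg) < \<epsilon>/4" using \<gamma>1(2)[OF Dd D1] .
    have "norm ((\<Sum>(x, k)\<in>D. measure lborel k *\<^sub>R f x) - y) \<le>
       norm ((\<Sum>(x,k)\<in>D. measure lborel k *\<^sub>R f x) - (\<Sum>(x,k)\<in>D. measure lborel k *\<^sub>R g x))
       + norm ((\<Sum>(x,k)\<in>D. measure lborel k *\<^sub>R g x) - yg) + norm (yg - y)"
      by (rule tri3)
    then show "norm ((\<Sum>(x, k)\<in>D. measure lborel k *\<^sub>R f x) - y) < \<epsilon>" using 1 2 r yg by linarith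
  qed
qed

lemma bochner_hk_aux:
  fixes g :: "real \<Rightarrow> 'y::{banach,second_countable_topology}"
  assumes "integrable lborel g"
  shows "(g has_integral (\<integral>x. indicator {a..b} x *\<^sub>R g x \<partial>lborel)) {a..b}"
  using assms
proof (induct rule: integrable_induct)
  case (base A c)
  have "integrable lborel (\<lambda>x. indicator {a..b} x *\<^sub>R (indicator A x :: real))"
    using base by (intro integrable_mult_indicator) auto
  then have si: "set_integrable lborel {a..b} (indicator A :: real \<Rightarrow> real)"
    by (simp add: set_integrable_def)
  have 1: "(indicator A has_integral (LINT x:{a..b}|lborel. (indicator A x :: real))) {a..b}"
    using set_borel_integral_eq_integral[OF si] by (simp add: integrable_integral)
  have "((\<lambda>x. indicator A x *\<^sub>R c) has_integral (LINT x:{a..b}|lborel. (indicator A x :: real)) *\<^sub>R c) {a..b}"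
    by (rule has_integral_scaleR_left[OF 1])
  moreover have "(\<integral>x. indicator {a..b} x *\<^sub>R (indicator A x *\<^sub>R c) \<partial>lborel)
      = (LINT x:{a..b}|lborel. (indicator A x :: real)) *\<^sub>R c"
    unfolding set_lebesgue_integral_def
    using si by (simp add: set_integrable_def flip: integral_scaleR_left)
  ultimately show ?case by simp
next
  case (add f g)
  have "integrable lborel (\<lambda>x. indicator {a..b} x *\<^sub>R f x)" "integrable lborel (\<lambda>x. indicator {a..b} x *\<^sub>R g x)"
    using add by (auto intro: integrable_mult_indicator)
  then have "(\<integral>x. indicator {a..b} x *\<^sub>R (f x + g x) \<partial>lborel) =
     (\<integral>x. indicator {a..b} x *\<^sub>R f x \<partial>lborel) + (\<integral>x. indicator {a..b} x *\<^sub>R g x \<partial>lborel)"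
    by (simp add: scaleR_add_right)
  then show ?case using has_integral_add[OF add(2) add(4)] by simp
next
  case (lim f s)
  let ?y = "\<integral>x. indicator {a..b} x *\<^sub>R f x \<partial>lborel"
  let ?yi = "\<lambda>i. \<integral>x. indicator {a..b} x *\<^sub>R s i x \<partial>lborel"
  let ?h = "\<lambda>i x. norm (f x - s i x)"
  let ?ri = "\<lambda>i. \<integral>x. indicator {a..b} x *\<^sub>R ?h i x \<partial>lborel"
  have fm: "f \<in> borel_measurable lborel" using lim by auto
  have sm: "\<And>i. s i \<in> borel_measurable lborel" using lim by auto
  have c1: "?yi \<longlonglongrightarrow> ?y"
  proof (rule integral_dominated_convergence[where w="\<lambda>x. 2 * norm (f x)"])
    show "integrable lborel (\<lambda>x. 2 * norm (f x))" using lim by auto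
    show "AE x in lborel. (\<lambda>i. indicator {a..b} x *\<^sub>R s i x) \<longlonglongrightarrow> indicator {a..b} x *\<^sub>R f x"
      using lim by (auto intro!: tendsto_scaleR)
    show "\<And>i. AE x in lborel. norm (indicator {a..b} x *\<^sub>R s i x) \<le> 2 * norm (f x)"
      using lim by (auto split: split_indicator)
  qed (use fm sm in auto)
  have c2: "?ri \<longlonglongrightarrow> (\<integral>x. indicator {a..b} x *\<^sub>R 0 \<partial>lborel)"
  proof (rule integral_dominated_convergence[where w="\<lambda>x. 3 * norm (f x)"])
    show "integrable lborel (\<lambda>x. 3 * norm (f x))" using lim by auto
    show "AE x in lborel. (\<lambda>i. indicator {a..b} x *\<^sub>R ?h i x) \<longlonglongrightarrow> indicator {a..b} x *\<^sub>R 0"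
    proof (intro AE_I2 tendsto_scaleR tendsto_const)
      fix x show "(\<lambda>i. norm (f x - s i x)) \<longlonglongrightarrow> 0"
      proof -
        have "(\<lambda>i. f x - s i x) \<longlonglongrightarrow> f x - f x" using lim(3)[of x] by (intro tendsto_intros) auto
        then show ?thesis using tendsto_norm_zero by fastforce
      qed
    qed
    show "\<And>i. AE x in lborel. norm (indicator {a..b} x *\<^sub>R ?h i x) \<le> 3 * norm (f x)"
    proof (intro AE_I2)
      fix i x
      have "norm (f x - s i x) \<le> norm (f x) + norm (s i x)" by (rule norm_triangle_ineq4)
      also have "\<dots> \<le> 3 * norm (f x)" using lim(4)[of x i] by simp
      finally show "norm (indicator {a..b} x *\<^sub>R ?h i x) \<le> 3 * norm (f x)"
        by (auto split: split_indicator)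
    qed
  qed (use fm sm in auto)
  have hint: "\<And>i. (?h i has_integral ?ri i) {a..b}"
  proof -
    fix i
    have "integrable lborel (\<lambda>x. indicator {a..b} x *\<^sub>R ?h i x)"
      using lim by (intro integrable_mult_indicator) auto
    then have si: "set_integrable lborel {a..b} (?h i)" by (simp add: set_integrable_def)
    show "(?h i has_integral ?ri i) {a..b}"
      using set_borel_integral_eq_integral[OF si]
      by (simp add: integrable_integral set_lebesgue_integral_def)
  qed
  show ?case
  proof (rule hk_approx)
    fix e :: real assume "e > 0"
    have "eventually (\<lambda>i. dist (?yi i) ?y < e) sequentially" using c1 \<open>e>0\<close> by (rule tendstoD)
    moreover have "eventually (\<lambda>i. dist (?ri i) 0 < e) sequentially"
    proof -
      have c2': "?ri \<longlonglongrightarrow> 0" using c2 by simp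
      show ?thesis using tendstoD[OF c2' \<open>e>0\<close>] .
    qed
    ultimately obtain i where i1: "dist (?yi i) ?y < e" and i2: "dist (?ri i) 0 < e"
      by (metis (no_types, lifting) eventually_conj eventually_sequentially order_refl)
    show "\<exists>g yg h r. (g has_integral yg) {a..b} \<and> (h has_integral r) {a..b}
      \<and> r < e \<and> (\<forall>x\<in>{a..b}. norm (f x - g x) \<le> h x) \<and> norm (yg - ?y) < e"
      using lim(2)[of i] hint[of i] i1 i2 by (intro exI[of _ "s i"] exI[of _ "?yi i"] exI[of _ "?h i"] exI[of _ "?ri i"])
        (auto simp: dist_norm)
  qed
qed

lemma bochner_hk:
  fixes f :: "real \<Rightarrow> 'y::{banach,second_countable_topology}"
  assumes "set_integrable lborel {a..b} f"
  shows "(f has_integral (LBINT x:{a..b}. f x)) {a..b}"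
proof -
  have "((\<lambda>x. indicator {a..b} x *\<^sub>R f x) has_integral
      (\<integral>x. indicator {a..b} x *\<^sub>R (indicator {a..b} x *\<^sub>R f x) \<partial>lborel)) {a..b}"
    using assms unfolding set_integrable_def by (rule bochner_hk_aux)
  moreover have "(\<lambda>x. indicator {a..b} x *\<^sub>R (indicator {a..b} x *\<^sub>R f x)) = (\<lambda>x. indicator {a..b} x *\<^sub>R f x)"
    by (auto simp: fun_eq_iff split: split_indicator)
  ultimately have "((\<lambda>x. indicator {a..b} x *\<^sub>R f x) has_integral (LBINT x:{a..b}. f x)) {a..b}"
    by (simp add: set_lebesgue_integral_def)
  then show ?thesis
    by (rule has_integral_eq[rotated]) (simp add: indicator_def)
qed


lemma unif_bound:
  fixes T :: "'i \<Rightarrow> ('y::banach \<Rightarrow>\<^sub>L 'y)"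
  assumes pb: "\<And>y. \<exists>B. \<forall>u\<in>K. norm (T u y) \<le> B"
  shows "\<exists>C\<ge>0. \<forall>u\<in>K. norm (T u) \<le> C"
proof -
  define E where "E n = {y. \<forall>u\<in>K. norm (T u y) \<le> real n}" for n :: nat
  have cl: "closed (E n)" for n
  proof -
    have "E n = (\<Inter>u\<in>K. {y. norm (blinfun_apply (T u) y) \<le> real n})" by (auto simp: E_def)
    also have "closed \<dots>"
      by (intro closed_INT ballI closed_Collect_le continuous_intros) 
    finally show ?thesis .
  qed
  have un: "\<Union>(range E) = UNIV"
  proof (rule set_eqI, rule iffI)
    fix y :: 'y
    show "y \<in> UNIV" by simp
    obtain B where B: "\<forall>u\<in>K. norm (T u y) \<le> B" using pb by blast
    have "B \<le> real (nat \<lceil>B\<rceil>)" by linarith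
    then have "y \<in> E (nat \<lceil>B\<rceil>)" using B by (auto simp: E_def intro: order_trans)
    then show "y \<in> \<Union>(range E)" by blast
  qed
  have "\<exists>n. interior (E n) \<noteq> {}"
  proof (rule ccontr)
    assume "\<not> ?thesis"
    then have "euclidean interior_of \<Union>(range E) = {}"
      by (intro Baire_category_alt) (auto simp: completely_metrizable_space_euclidean euclidean_interior_of
          cl simp flip: closed_closedin)
    then show False using un by (simp add: euclidean_interior_of)
  qed
  then obtain n y0 where "y0 \<in> interior (E n)" by blast
  then obtain r where r: "r > 0" "ball y0 r \<subseteq> E n"
    by (meson interior_subset open_contains_ball_eq open_interior subset_trans)
  have y0: "y0 \<in> E n" using r by (meson centre_in_ball subsetD)
  have bd: "norm (T u x) \<le> (4 * real n / r) * norm x" if u: "u \<in> K" for u x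
  proof (cases "x = 0")
    case True then show ?thesis by simp
  next
    case False
    define y where "y = (r / (2 * norm x)) *\<^sub>R x"
    have ny: "norm y = r / 2" using False r by (simp add: y_def)
    then have "y0 + y \<in> E n" using r by (intro subsetD[OF r(2)]) (simp add: dist_norm)
    then have 1: "norm (T u (y0 + y)) \<le> real n" using u by (auto simp: E_def)
    have 2: "norm (T u y0) \<le> real n" using y0 u by (auto simp: E_def)
    have "norm (T u y) = norm (T u (y0 + y) - T u y0)" by (simp add: blinfun.add_right)
    also have "\<dots> \<le> 2 * real n" using 1 2 norm_triangle_ineq4[of "T u (y0 + y)" "T u y0"] by linarith
    finally have 3: "norm (T u y) \<le> 2 * real n" .
    have "x = (2 * norm x / r) *\<^sub>R y" using False r by (simp add: y_def)
    then have "T u x = (2 * norm x / r) *\<^sub>R T u y" by (metis blinfun.scaleR_right)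
    then have "norm (T u x) = (2 * norm x / r) * norm (T u y)" using r by simp
    also have "\<dots> \<le> (2 * norm x / r) * (2 * real n)" using 3 r by (intro mult_left_mono) auto
    finally show ?thesis by (simp add: field_simps)
  qed
  show ?thesis
    using r by (intro exI[of _ "4 * real n / r"]) (auto intro!: norm_blinfun_bound bd)
qed


lemma within_mono_ev:
  assumes "eventually (\<lambda>x. x \<in> S) (at a within T)" "(f \<longlongrightarrow> l) (at a within S)"
  shows "(f \<longlongrightarrow> l) (at a within T)"
  using assms unfolding tendsto_def eventually_at_filter
  by (auto elim: eventually_elim2)

lemma strong_tendsto:
  fixes T :: "'a \<Rightarrow> ('b::real_normed_vector \<Rightarrow>\<^sub>L 'c::real_normed_vector)"
  assumes C: "eventually (\<lambda>x. norm (T x) \<le> C) F" and T: "((\<lambda>x. T x y) \<longlongrightarrow> l) F" and w: "(w \<longlongrightarrow> y) F"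
  shows "((\<lambda>x. T x (w x)) \<longlongrightarrow> l) F"
proof -
  have "((\<lambda>x. T x (w x - y)) \<longlongrightarrow> 0) F"
  proof (rule Lim_null_comparison)
    show "eventually (\<lambda>x. norm (T x (w x - y)) \<le> C * norm (w x - y)) F"
      using C by eventually_elim (meson norm_blinfun order_trans mult_right_mono norm_ge_zero)
    have "((\<lambda>x. w x - y) \<longlongrightarrow> 0) F" using w by (simp add: LIM_zero)
    then show "((\<lambda>x. C * norm (w x - y)) \<longlongrightarrow> 0) F"
      using tendsto_mult_right_zero tendsto_norm_zero by blast
  qed
  from tendsto_add[OF T this] show ?thesis by (simp add: blinfun.diff_right)
qed

lemma vderiv_quot:
  fixes f :: "real \<Rightarrow> 'a::real_normed_vector"
  assumes "((\<lambda>h. (1/h) *\<^sub>R (f (x+h) - f x)) \<longlongrightarrow> D) (at 0)"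
  shows "(f has_vector_derivative D) (at x)"
  unfolding has_vector_derivative_def has_derivative_at
proof (intro conjI)
  show "bounded_linear (\<lambda>h. h *\<^sub>R D)" by (rule bounded_linear_scaleR_left)
  have "((\<lambda>h. (1/h) *\<^sub>R (f (x+h) - f x) - D) \<longlongrightarrow> 0) (at 0)" using assms by (simp add: LIM_zero)
  then have "((\<lambda>h. norm ((1/h) *\<^sub>R (f (x+h) - f x) - D)) \<longlongrightarrow> 0) (at 0)" by (rule tendsto_norm_zero)
  moreover have "eventually (\<lambda>h. norm ((1/h) *\<^sub>R (f (x+h) - f x) - D) =
      norm (f (x + h) - f x - h *\<^sub>R D) / norm h) (at (0::real))"
  proof (rule eventually_at_filter[THEN iffD2], intro always_eventually allI impI)
    fix h :: real assume "h \<noteq> 0" 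
    have "(1/h) *\<^sub>R (f (x+h) - f x) - D = (1/h) *\<^sub>R (f (x + h) - f x - h *\<^sub>R D)"
      using \<open>h\<noteq>0\<close> by (simp add: scaleR_diff_right)
    then show "norm ((1/h) *\<^sub>R (f (x+h) - f x) - D) = norm (f (x + h) - f x - h *\<^sub>R D) / norm h"
      by (simp add: divide_inverse_commute)
  qed
  ultimately show "(\<lambda>h. norm (f (x + h) - f x - h *\<^sub>R D) / norm h) \<midarrow>0\<rightarrow> 0"
    by (rule Lim_transform_eventually)
qed


lemma shift_within:
  fixes f :: "real \<Rightarrow> 'a::metric_space"
  assumes "((\<lambda>h. f (v+h)) \<longlongrightarrow> l) (at 0 within {h. v+h \<in> S})"
  shows "(f \<longlongrightarrow> l) (at v within S)"
  unfolding tendsto_iff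
proof (intro allI impI)
  fix e :: real assume "e > 0"
  then have "eventually (\<lambda>h. dist (f (v+h)) l < e) (at 0 within {h. v+h \<in> S})"
    using assms by (simp add: tendsto_iff)
  then obtain d where d: "d > 0" "\<forall>h\<in>{h. v+h \<in> S}. h \<noteq> 0 \<and> dist h 0 < d \<longrightarrow> dist (f (v+h)) l < e"
    unfolding eventually_at by blast
  show "eventually (\<lambda>x. dist (f x) l < e) (at v within S)"
    unfolding eventually_at
  proof (intro exI[of _ d] conjI ballI impI)
    fix x assume "x \<in> S" "x \<noteq> v \<and> dist x v < d"
    then show "dist (f x) l < e" using d(2)[rule_format, of "x - v"] by (auto simp: dist_real_def)
  qed (use d in auto)
qed

lemma quot_vderiv:
  fixes f :: "real \<Rightarrow> 'a::real_normed_vector"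
  assumes "(f has_vector_derivative D) (at x)"
  shows "((\<lambda>h. (1/h) *\<^sub>R (f (x+h) - f x)) \<longlongrightarrow> D) (at 0)"
proof -
  have "(\<lambda>h. norm (f (x + h) - f x - h *\<^sub>R D) / norm h) \<midarrow>0\<rightarrow> 0"
    using assms unfolding has_vector_derivative_def has_derivative_at by blast
  moreover have "eventually (\<lambda>h. norm (f (x + h) - f x - h *\<^sub>R D) / norm h = 
      norm ((1/h) *\<^sub>R (f (x+h) - f x) - D)) (at (0::real))"
  proof (rule eventually_at_filter[THEN iffD2], intro always_eventually allI impI)
    fix h :: real assume "h \<noteq> 0" 
    have "(1/h) *\<^sub>R (f (x+h) - f x) - D = (1/h) *\<^sub>R (f (x + h) - f x - h *\<^sub>R D)"
      using \<open>h\<noteq>0\<close> by (simp add: scaleR_diff_right)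
    then show "norm (f (x + h) - f x - h *\<^sub>R D) / norm h = norm ((1/h) *\<^sub>R (f (x+h) - f x) - D)"
      by (simp add: divide_inverse_commute)
  qed
  ultimately have "((\<lambda>h. norm ((1/h) *\<^sub>R (f (x+h) - f x) - D)) \<longlongrightarrow> 0) (at 0)"
    by (rule Lim_transform_eventually)
  then have "((\<lambda>h. (1/h) *\<^sub>R (f (x+h) - f x) - D) \<longlongrightarrow> 0) (at 0)"
    by (simp add: tendsto_norm_zero_iff)
  then show ?thesis by (simp add: LIM_zero_iff)
qed


lemma ev_in:
  assumes "s < u" "u < t"
  shows "eventually (\<lambda>h. u + h \<in> {s<..<t}) (at (0::real))"
  unfolding eventually_at using assms
  by (intro exI[of _ "min (u - s) (t - u)"]) (auto simp: dist_real_def)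

lemma scale_int:
  fixes g :: "real \<Rightarrow> 'a::{banach,second_countable_topology}"
  assumes g: "set_integrable lborel {s..t} g" and st: "s \<le> t"
  shows "set_integrable lborel {s..t} (\<lambda>u. (t - u) *\<^sub>R g u)"
proof (rule set_integrable_bound[where f="\<lambda>u. (t - s) *\<^sub>R g u"])
  show "set_integrable lborel {s..t} (\<lambda>u. (t - s) *\<^sub>R g u)" using g by auto
  have "(\<lambda>x. indicator {s..t} x *\<^sub>R g x) \<in> borel_measurable lborel"
    using g unfolding set_integrable_def by (rule borel_measurable_integrable)
  then have "(\<lambda>x. (t - x) *\<^sub>R (indicator {s..t} x *\<^sub>R g x)) \<in> borel_measurable lborel"
    by measurable
  then show "set_borel_measurable lborel {s..t} (\<lambda>u. (t - u) *\<^sub>R g u)"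
    unfolding set_borel_measurable_def by (simp add: scaleR_left_commute mult.commute)
  show "AE x in lborel. x \<in> {s..t} \<longrightarrow> norm ((t - x) *\<^sub>R g x) \<le> norm ((t - s) *\<^sub>R g x)"
    using st by (intro AE_I2) (auto intro!: mult_right_mono)
qed

context
  fixes G :: "real \<Rightarrow> real \<Rightarrow> ('y::{banach,second_countable_topology} \<Rightarrow>\<^sub>L 'y)"
    and \<iota> :: "'z::{banach,second_countable_topology} \<Rightarrow>\<^sub>L 'y" and J :: "real set"
  assumes J: "is_J J" and emb: "inj (blinfun_apply \<iota>)" and semi: "inhom_semigroup J G"
    and reg: "regular J G \<iota>"
begin

lemma J_cases: "J = {0..} \<or> (\<exists>T>0. J = {0..T})" using J by (simp add: is_J_def)

lemma J_conv: "a \<in> J \<Longrightarrow> b \<in> J \<Longrightarrow> a \<le> u \<Longrightarrow> u \<le> b \<Longrightarrow> u \<in> J"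
  using J_cases by auto

lemma J_nonneg: "u \<in> J \<Longrightarrow> 0 \<le> u" using J_cases by auto

lemma J_0: "0 \<in> J" using J_cases by auto

lemma J_nontriv: "t \<in> J \<Longrightarrow> (\<exists>v\<in>J. t < v) \<or> 0 < t"
  using J_cases by (auto intro: bexI[of _ "t+1"])

lemma Delta_iff: "(a, b) \<in> Delta J \<longleftrightarrow> a \<in> J \<and> b \<in> J \<and> a \<le> b"
  by (simp add: Delta_def)

lemma G_id: "t \<in> J \<Longrightarrow> G t t y = y"
  using semi by (simp add: inhom_semigroup_def)

lemma G_comp: "a \<in> J \<Longrightarrow> r \<in> J \<Longrightarrow> b \<in> J \<Longrightarrow> a \<le> r \<Longrightarrow> r \<le> b \<Longrightarrow> G a b y = G a r (G r b y)"
  using semi unfolding inhom_semigroup_def by (metis blinfun_apply_blinfun_compose)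

lemma gen_unique:
  assumes t: "t \<in> J" and g1: "has_gen J G t f g1" and g2: "has_gen J G t f g2"
  shows "g1 = g2"
proof -
  from J_nontriv[OF t] show ?thesis
  proof
    assume "\<exists>v\<in>J. t < v"
    then obtain v where v: "v \<in> J" "t < v" by blast
    have "{0<..<v-t} \<subseteq> {h. 0 < h \<and> t + h \<in> J}"
      using v t by (auto intro: J_conv[OF t v(1)])
    then have "(0::real) islimpt {h. 0 < h \<and> t + h \<in> J}"
      using v by (meson islimpt_greaterThanLessThan1 islimpt_subset diff_gt_0_iff_gt)
    then have ne: "at 0 within {h. 0 < h \<and> t + h \<in> J} \<noteq> bot" by (simp add: trivial_limit_within)
    show ?thesis using tendsto_unique[OF ne] g1 g2 unfolding has_gen_def by blast
  next
    assume "0 < t"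
    have "{0<..<t} \<subseteq> {h. 0 < h \<and> t - h \<in> J}"
      using t J_0 by (auto intro: J_conv[OF J_0 t])
    then have "(0::real) islimpt {h. 0 < h \<and> t - h \<in> J}"
      using \<open>0<t\<close> by (meson islimpt_greaterThanLessThan1 islimpt_subset)
    then have ne: "at 0 within {h. 0 < h \<and> t - h \<in> J} \<noteq> bot" by (simp add: trivial_limit_within)
    show ?thesis using tendsto_unique[OF ne] g1 g2 unfolding has_gen_def by blast
  qed
qed

lemma gen_ok: "t \<in> J \<Longrightarrow> gen_dom J G t f \<Longrightarrow> has_gen J G t f (gen J G t f)"
  unfolding gen_def gen_dom_def by (metis gen_unique theI)

lemma reg_dom: "t \<in> J \<Longrightarrow> gen_dom J G t (\<iota> z)"
  using reg by (simp add: regular_def)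

lemma reg_range: "a \<in> J \<Longrightarrow> b \<in> J \<Longrightarrow> a \<le> b \<Longrightarrow> G a b (\<iota> z) \<in> range \<iota>"
  using reg unfolding regular_def Delta_def by auto

lemma reg_cont1: "t \<in> J \<Longrightarrow> continuous_on {u\<in>J. u \<le> t} (\<lambda>u. inv \<iota> (G u t (\<iota> z)))"
  using reg by (simp add: regular_def)

lemma reg_cont2: "s \<in> J \<Longrightarrow> continuous_on {u\<in>J. s \<le> u} (\<lambda>u. G s u f)"
  using reg by (simp add: regular_def)

lemma reg_int: "a \<in> J \<Longrightarrow> b \<in> J \<Longrightarrow> a \<le> b \<Longrightarrow> set_integrable lborel {a..b} (\<lambda>u. G a u (gen J G u (\<iota> z)))"
  using reg unfolding regular_def Delta_def by auto

lemma has_gen_iota: "t \<in> J \<Longrightarrow> has_gen J G t (\<iota> z) (gen J G t (\<iota> z))"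
  by (intro gen_ok reg_dom)

lemma cont1': 
  assumes "t \<in> J" shows "continuous_on {u\<in>J. u \<le> t} (\<lambda>u. G u t (\<iota> z))"
proof -
  have "continuous_on {u\<in>J. u \<le> t} (\<lambda>u. \<iota> (inv \<iota> (G u t (\<iota> z))))"
    by (rule blinfun.continuous_on[OF continuous_on_const reg_cont1[OF assms]])
  moreover have "\<And>u. u \<in> {u\<in>J. u \<le> t} \<Longrightarrow> \<iota> (inv \<iota> (G u t (\<iota> z))) = G u t (\<iota> z)"
    using reg_range assms by (auto intro: f_inv_into_f)
  ultimately show ?thesis by (rule continuous_on_eq)
qed

lemma UB:
  assumes "a \<in> J" "b \<in> J"
  shows "\<exists>C\<ge>0. \<forall>u\<in>{a..b}. norm (G a u) \<le> C"
proof (rule unif_bound)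
  fix y
  have "continuous_on {a..b} (\<lambda>u. G a u y)"
    using reg_cont2[OF assms(1)] by (rule continuous_on_subset) (auto intro: J_conv[OF assms])
  then have "bounded ((\<lambda>u. G a u y) ` {a..b})"
    by (intro compact_imp_bounded compact_continuous_image) auto
  then obtain B where "\<forall>x\<in>(\<lambda>u. G a u y) ` {a..b}. norm x \<le> B"
    unfolding bounded_iff by blast
  then show "\<exists>B. \<forall>u\<in>{a..b}. norm (G a u y) \<le> B" by blast
qed

lemma cont_G_on: assumes "a \<in> J" "b \<in> J" shows "continuous_on {a..b} (\<lambda>v. G a v y)"
  using reg_cont2[OF assms(1)] by (rule continuous_on_subset) (auto intro: J_conv[OF assms])

lemma deriv_G:
  assumes a: "a \<in> J" and b: "b \<in> J" and u: "a < u" "u < b"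
  shows "((\<lambda>v. G a v (\<iota> z)) has_vector_derivative G a u (gen J G u (\<iota> z))) (at u)"
proof -
  let ?g = "\<iota> z" and ?A = "gen J G u (\<iota> z)"
  have uJ: "u \<in> J" using J_conv[OF a b] u by auto
  have hg: "has_gen J G u ?g ?A" by (rule has_gen_iota[OF uJ])
  have R: "((\<lambda>h. (1/h) *\<^sub>R (G u (u+h) ?g - ?g)) \<longlongrightarrow> ?A) (at_right 0)"
  proof (rule within_mono_ev[of "{h. 0 < h \<and> u + h \<in> J}"])
    show "eventually (\<lambda>h. h \<in> {h. 0 < h \<and> u + h \<in> J}) (at_right 0)"
      unfolding eventually_at_right_field using u
      by (intro exI[of _ "b - u"]) (auto intro: J_conv[OF uJ b])
  qed (use hg in \<open>simp add: has_gen_def\<close>)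
  have L: "((\<lambda>h. (1/h) *\<^sub>R (G (u-h) u ?g - ?g)) \<longlongrightarrow> ?A) (at_right 0)"
  proof (rule within_mono_ev[of "{h. 0 < h \<and> u - h \<in> J}"])
    show "eventually (\<lambda>h. h \<in> {h. 0 < h \<and> u - h \<in> J}) (at_right 0)"
      unfolding eventually_at_right_field using u
      by (intro exI[of _ "u - a"]) (auto intro: J_conv[OF a uJ])
  qed (use hg in \<open>simp add: has_gen_def\<close>)
  obtain C where C: "C \<ge> 0" "\<forall>v\<in>{a..b}. norm (G a v) \<le> C" using UB[OF a b] by blast
  have ic: "isCont (\<lambda>v. G a v ?A) u"
    using cont_G_on[OF a b] u by (intro continuous_on_interior) auto
  show ?thesis
  proof (rule vderiv_quot, unfold filterlim_at_split, intro conjI)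
    have 1: "((\<lambda>h. G a u ((1/h) *\<^sub>R (G u (u+h) ?g - ?g))) \<longlongrightarrow> G a u ?A) (at_right 0)"
      by (rule blinfun.tendsto[OF tendsto_const R])
    have 2: "eventually (\<lambda>h. G a u ((1/h) *\<^sub>R (G u (u+h) ?g - ?g)) = (1/h) *\<^sub>R (G a (u+h) ?g - G a u ?g)) (at_right 0)"
      unfolding eventually_at_right_field using u
    proof (intro exI[of _ "b - u"] conjI allI impI)
      fix h :: real assume h: "h > 0" "h < b - u"
      have "u + h \<in> J" using h by (auto intro: J_conv[OF uJ b])
      then have "G a (u+h) ?g = G a u (G u (u+h) ?g)" using a uJ h u by (intro G_comp) auto
      then show "G a u ((1/h) *\<^sub>R (G u (u+h) ?g - ?g)) = (1/h) *\<^sub>R (G a (u+h) ?g - G a u ?g)"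
        by (simp add: blinfun.scaleR_right blinfun.diff_right)
    qed simp
    show "((\<lambda>h. (1/h) *\<^sub>R (G a (u+h) ?g - G a u ?g)) \<longlongrightarrow> G a u ?A) (at_right 0)"
      using Lim_transform_eventually[OF 1 2] .
  next
    have 3: "((\<lambda>h. G a (u-h) ((1/h) *\<^sub>R (G (u-h) u ?g - ?g))) \<longlongrightarrow> G a u ?A) (at_right 0)"
    proof (rule strong_tendsto[OF _ _ L])
      show "eventually (\<lambda>h. norm (G a (u-h)) \<le> C) (at_right 0)"
        unfolding eventually_at_right_field using u C by (intro exI[of _ "u - a"]) auto
      have "((\<lambda>h. u - h) \<longlongrightarrow> u - 0) (at_right (0::real))" by (intro tendsto_intros)
      then show "((\<lambda>h. G a (u-h) ?A) \<longlongrightarrow> G a u ?A) (at_right 0)"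
        using isCont_tendsto_compose[OF ic] by simp
    qed
    have 4: "eventually (\<lambda>h. G a (u-h) ((1/h) *\<^sub>R (G (u-h) u ?g - ?g)) = (1 / - h) *\<^sub>R (G a (u + - h) ?g - G a u ?g)) (at_right 0)"
      unfolding eventually_at_right_field using u
    proof (intro exI[of _ "u - a"] conjI allI impI)
      fix h :: real assume h: "h > 0" "h < u - a"
      have "u - h \<in> J" using h by (auto intro: J_conv[OF a uJ])
      then have "G a u ?g = G a (u-h) (G (u-h) u ?g)" using a uJ h u by (intro G_comp) auto
      then show "G a (u-h) ((1/h) *\<^sub>R (G (u-h) u ?g - ?g)) = (1 / - h) *\<^sub>R (G a (u + - h) ?g - G a u ?g)"
        by (simp add: blinfun.scaleR_right blinfun.diff_right scaleR_diff_right)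
    qed simp
    show "((\<lambda>h. (1/h) *\<^sub>R (G a (u+h) ?g - G a u ?g)) \<longlongrightarrow> G a u ?A) (at_left 0)"
      unfolding filterlim_at_left_to_right using Lim_transform_eventually[OF 3 4] by simp
  qed
qed

lemma ftc_G:
  assumes a: "a \<in> J" and b: "b \<in> J" and ab: "a \<le> b"
  shows "G a b (\<iota> z) - \<iota> z = (LBINT u:{a..b}. G a u (gen J G u (\<iota> z)))"
proof -
  have "((\<lambda>u. G a u (gen J G u (\<iota> z))) has_integral (G a b (\<iota> z) - G a a (\<iota> z))) {a..b}"
    by (rule fundamental_theorem_of_calculus_interior[OF ab cont_G_on[OF a b]])
       (use deriv_G[OF a b] in auto)
  moreover have "((\<lambda>u. G a u (gen J G u (\<iota> z))) has_integral (LBINT u:{a..b}. G a u (gen J G u (\<iota> z)))) {a..b}"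
    by (rule bochner_hk[OF reg_int[OF a b ab]])
  ultimately show ?thesis using G_id[OF a] has_integral_unique by metis
qed

lemma gen_meas:
  assumes s: "s \<in> J" and t: "t \<in> J" and st: "s \<le> t"
    and rng: "\<forall>u\<in>{s..t}. gen J G u (\<iota> z) \<in> range \<iota>"
  shows "set_borel_measurable lborel {s..t} (\<lambda>u. gen J G u (\<iota> z))"
  unfolding set_borel_measurable_def
proof -
  define c where "c k = real (Suc k)" for k :: nat
  have cpos: "c k > 0" for k by (simp add: c_def)
  define H where "H k j u = (if real j / c k \<le> t then indicator {real j / c k..t} u *\<^sub>R G (real j / c k) u (gen J G u (\<iota> z)) else 0)"
    for k j :: nat and u
  have Hm: "H k j \<in> borel_measurable lborel" for k j
  proof (cases "real j / c k \<le> t")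
    case True
    have aJ: "real j / c k \<in> J" using True cpos[of k] by (intro J_conv[OF J_0 t]) auto
    have "set_integrable lborel {real j / c k..t} (\<lambda>u. G (real j / c k) u (gen J G u (\<iota> z)))"
      by (rule reg_int[OF aJ t True])
    then have "(\<lambda>u. indicator {real j / c k..t} u *\<^sub>R G (real j / c k) u (gen J G u (\<iota> z))) \<in> borel_measurable lborel"
      unfolding set_integrable_def by (rule borel_measurable_integrable)
    moreover have "H k j = (\<lambda>u. indicator {real j / c k..t} u *\<^sub>R G (real j / c k) u (gen J G u (\<iota> z)))"
      using True by (simp add: H_def fun_eq_iff)
    ultimately show ?thesis by simp
  next
    case False
    then have "H k j = (\<lambda>u. 0)" by (simp add: H_def fun_eq_iff)
    then show ?thesis by simp
  qed
  define h where "h k u = indicator {s..t} u *\<^sub>R H k (nat \<lfloor>c k * u\<rfloor>) u" for k u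
  have hm: "h k \<in> borel_measurable lborel" for k
  proof -
    have "(\<lambda>u. H k (nat \<lfloor>c k * u\<rfloor>) u) \<in> borel_measurable lborel"
      by (rule measurable_compose_countable[OF Hm]) measurable
    then show ?thesis unfolding h_def by measurable
  qed
  show "(\<lambda>u. indicator {s..t} u *\<^sub>R gen J G u (\<iota> z)) \<in> borel_measurable lborel"
  proof (rule borel_measurable_LIMSEQ_metric[OF hm])
    fix u :: real
    show "(\<lambda>k. h k u) \<longlonglongrightarrow> indicator {s..t} u *\<^sub>R gen J G u (\<iota> z)"
    proof (cases "u \<in> {s..t}")
      case False then show ?thesis by (simp add: h_def)
    next
      case True
      have uJ: "u \<in> J" using True by (auto intro: J_conv[OF s t])
      have u0: "0 \<le> u" using J_nonneg[OF s] True by auto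
      obtain w where w: "gen J G u (\<iota> z) = \<iota> w" using rng True by blast
      define a where "a k = real (nat \<lfloor>c k * u\<rfloor>) / c k" for k
      have a_le: "a k \<le> u" for k
      proof -
        have "real (nat \<lfloor>c k * u\<rfloor>) \<le> c k * u" using u0 cpos[of k] by simp
        then show ?thesis using cpos[of k] by (simp add: a_def divide_le_eq mult.commute)
      qed
      have a_ge: "u - 1 / c k \<le> a k" for k
      proof -
        have "c k * u - 1 \<le> real (nat \<lfloor>c k * u\<rfloor>)" using u0 cpos[of k] by simp
        then have "(c k * u - 1) / c k \<le> real (nat \<lfloor>c k * u\<rfloor>) / c k"
          using cpos[of k] by (intro divide_right_mono) auto
        then show ?thesis using cpos[of k] by (simp add: a_def diff_divide_distrib)
      qed
      have a0: "0 \<le> a k" for k using cpos[of k] u0 by (simp add: a_def)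
      have aJ: "a k \<in> J" for k using a0 a_le by (intro J_conv[OF J_0 uJ])
      have "(\<lambda>k. u - 1 / c k) \<longlonglongrightarrow> u - 0"
        unfolding c_def by (intro tendsto_intros LIMSEQ_inverse_real_of_nat[unfolded inverse_eq_divide])
      then have l1: "(\<lambda>k. u - 1 / c k) \<longlonglongrightarrow> u" by simp
      have e1: "eventually (\<lambda>k. u - 1 / c k \<le> a k) sequentially" using a_ge by simp
      have e2: "eventually (\<lambda>k. a k \<le> u) sequentially" using a_le by simp
      have alim: "a \<longlonglongrightarrow> u" by (rule tendsto_sandwich[OF e1 e2 l1 tendsto_const])
      have "(\<lambda>k. G (a k) u (\<iota> w)) \<longlonglongrightarrow> G u u (\<iota> w)"
        by (rule continuous_on_tendsto_compose[OF cont1'[OF uJ] alim]) (use uJ aJ a_le in auto)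
      moreover have "h k u = G (a k) u (\<iota> w)" for k
        using True a_le[of k] w by (simp add: h_def H_def a_def[symmetric])
      ultimately show ?thesis using True w G_id[OF uJ] by simp
    qed
  qed
qed

lemma gen_int:
  assumes s: "s \<in> J" and t: "t \<in> J" and st: "s \<le> t"
    and rng: "\<forall>u\<in>{s..t}. gen J G u (\<iota> z) \<in> range \<iota>"
    and bdd: "\<forall>u\<in>J. bounded_linear (\<lambda>z. gen J G u (\<iota> z))"
    and L1: "set_integrable lborel {s..t} (\<lambda>u. onorm (\<lambda>z. gen J G u (\<iota> z)))"
  shows "set_integrable lborel {s..t} (\<lambda>u. gen J G u (\<iota> z))"
proof (rule set_integrable_bound[OF _ gen_meas[OF s t st rng]])
  show "set_integrable lborel {s..t} (\<lambda>u. onorm (\<lambda>z. gen J G u (\<iota> z)) * norm z)"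
    using L1 by (rule set_integrable_mult_left)
  show "AE x in lborel. x \<in> {s..t} \<longrightarrow> norm (gen J G x (\<iota> z)) \<le> norm (onorm (\<lambda>z. gen J G x (\<iota> z)) * norm z)"
  proof (rule AE_I2, rule impI)
    fix x assume "x \<in> {s..t}"
    then have "x \<in> J" by (auto intro: J_conv[OF s t])
    then have "norm (gen J G x (\<iota> z)) \<le> onorm (\<lambda>z. gen J G x (\<iota> z)) * norm z"
      using bdd by (intro onorm[where f="\<lambda>z. gen J G x (\<iota> z)"]) auto
    then show "norm (gen J G x (\<iota> z)) \<le> norm (onorm (\<lambda>z. gen J G x (\<iota> z)) * norm z)" by simp
  qed
qed



lemma part1:
  assumes s: "s \<in> J" and t: "t \<in> J" and st: "s \<le> t"
    and bdd: "\<forall>u\<in>J. bounded_linear (\<lambda>z. gen J G u (\<iota> z))"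
    and L1: "set_integrable lborel {s..t} (\<lambda>u. onorm (\<lambda>z. gen J G u (\<iota> z)))"
    and f: "f \<in> dom_AY1 J G \<iota>"
  shows "G s t f = f + (LBINT u:{s..t}. gen J G u f)
                + (LBINT u:{s..t}. LBINT r:{s..u}. G s r (gen J G r (gen J G u f)))"
proof -
  obtain z where z: "f = \<iota> z" using f by (auto simp: dom_AY1_def)
  have rng: "\<forall>u\<in>J. gen J G u f \<in> range \<iota>" using f by (auto simp: dom_AY1_def)
  have Feq: "\<forall>u. u \<in> {s..t} \<longrightarrow> (LBINT r:{s..u}. G s r (gen J G r (gen J G u f))) = G s u (gen J G u f) - gen J G u f"
  proof (intro allI impI)
    fix u assume u: "u \<in> {s..t}"
    then have uJ: "u \<in> J" by (auto intro: J_conv[OF s t])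
    obtain w where w: "gen J G u f = \<iota> w" using rng uJ by blast
    show "(LBINT r:{s..u}. G s r (gen J G r (gen J G u f))) = G s u (gen J G u f) - gen J G u f"
      using ftc_G[OF s uJ, of w] u by (simp add: w)
  qed
  have I0: "set_integrable lborel {s..t} (\<lambda>u. G s u (gen J G u f))" unfolding z by (rule reg_int[OF s t st])
  have Ia: "set_integrable lborel {s..t} (\<lambda>u. gen J G u f)"
    unfolding z by (rule gen_int[OF s t st _ bdd L1]) (use rng z J_conv[OF s t] in \<open>auto\<close>)
  have "(LBINT u:{s..t}. LBINT r:{s..u}. G s r (gen J G r (gen J G u f)))
      = (LBINT u:{s..t}. G s u (gen J G u f) - gen J G u f)"
    using Feq by (intro set_lebesgue_integral_cong) auto
  also have "\<dots> = (LBINT u:{s..t}. G s u (gen J G u f)) - (LBINT u:{s..t}. gen J G u f)"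
    by (rule set_integral_diff(2)[OF I0 Ia])
  finally have 1: "(LBINT u:{s..t}. LBINT r:{s..u}. G s r (gen J G r (gen J G u f)))
      = (LBINT u:{s..t}. G s u (gen J G u f)) - (LBINT u:{s..t}. gen J G u f)" .
  have 2: "G s t f - f = (LBINT u:{s..t}. G s u (gen J G u f))" unfolding z by (rule ftc_G[OF s t st])
  show ?thesis using 1 2 by (simp add: algebra_simps)
qed



lemma gen_deriv_unique:
  assumes u: "u \<in> J" and g1: "has_gen_deriv J G \<iota> u f g1" and g2: "has_gen_deriv J G \<iota> u f g2"
  shows "g1 = g2"
proof -
  have "(0::real) islimpt {h. u + h \<in> J}"
  proof (cases "\<exists>v\<in>J. u < v")
    case True
    then obtain v where v: "v \<in> J" "u < v" by blast
    have "{0<..<v-u} \<subseteq> {h. u + h \<in> J}" using v u by (auto intro: J_conv[OF u v(1)])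
    then show ?thesis using v by (meson islimpt_greaterThanLessThan1 islimpt_subset diff_gt_0_iff_gt)
  next
    case False
    then have "0 < u" using J_nontriv[OF u] by blast
    have "{-u<..<0} \<subseteq> {h. u + h \<in> J}" using u J_0 by (auto intro: J_conv[OF J_0 u])
    then show ?thesis using \<open>0<u\<close> by (meson islimpt_greaterThanLessThan2 islimpt_subset neg_less_0_iff_less)
  qed
  then have ne: "at 0 within {h. u + h \<in> J} \<noteq> bot" by (simp add: trivial_limit_within)
  show ?thesis using tendsto_unique[OF ne] g1 g2 unfolding has_gen_deriv_def by blast
qed

lemma gen_deriv_ok:
  assumes "u \<in> J" "f \<in> dom_A' J G \<iota>"
  shows "has_gen_deriv J G \<iota> u f (THE g'. has_gen_deriv J G \<iota> u f g')"
proof -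
  obtain g where "has_gen_deriv J G \<iota> u f g" using assms by (auto simp: dom_A'_def)
  then show ?thesis using gen_deriv_unique[OF assms(1)] by (metis theI)
qed

lemma part2:
  assumes s: "s \<in> J" and t: "t \<in> J" and st: "s \<le> t"
    and bdd: "\<forall>u\<in>J. bounded_linear (\<lambda>z. gen J G u (\<iota> z))"
    and L1: "set_integrable lborel {s..t} (\<lambda>u. onorm (\<lambda>z. gen J G u (\<iota> z)))"
    and f: "f \<in> dom_A' J G \<iota>"
    and I1: "set_integrable lborel {s..t} (\<lambda>u. G s u (gen J G u (gen J G u f)))"
    and I2: "set_integrable lborel {s..t} (\<lambda>u. LBINT r:{s..u}. G s r (gen J G r (gen' J G \<iota> u f)))"
  shows "G s t f = f + (LBINT u:{s..t}. gen J G u f)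
                  + (LBINT u:{s..t}. (t - u) *\<^sub>R G s u (gen J G u (gen J G u f)))
                  + (LBINT u:{s..t}. (t - u) *\<^sub>R
                       (LBINT r:{s..u}. G s r (gen J G r (gen' J G \<iota> u f))))"
proof -
  have fY: "f \<in> dom_AY1 J G \<iota>" using f by (simp add: dom_A'_def)
  obtain z where z: "f = \<iota> z" using fY by (auto simp: dom_AY1_def)
  have rng: "\<forall>u\<in>J. gen J G u f \<in> range \<iota>" using fY by (auto simp: dom_AY1_def)
  define W where "W u = gen J G u f" for u
  define zf where "zf u = inv \<iota> (W u)" for u
  define Z' where "Z' u = (THE g'. has_gen_deriv J G \<iota> u f g')" for u
  have Wz: "\<iota> (zf u) = W u" if "u \<in> J" for u
    using rng that unfolding zf_def W_def by (auto intro: f_inv_into_f)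
  have g'eq: "gen' J G \<iota> u f = \<iota> (Z' u)" for u by (simp add: gen'_def Z'_def)
  have hgd: "((\<lambda>h. (1/h) *\<^sub>R (zf (u+h) - zf u)) \<longlongrightarrow> Z' u) (at 0 within {h. u + h \<in> J})" if "u \<in> J" for u
    using gen_deriv_ok[OF that f] unfolding has_gen_deriv_def Z'_def zf_def W_def .
  have sub: "{s..t} \<subseteq> J" using J_conv[OF s t] by auto
  have QW: "((\<lambda>h. (1/h) *\<^sub>R (W (u+h) - W u)) \<longlongrightarrow> gen' J G \<iota> u f) (at 0)" if u: "s < u" "u < t" for u
  proof -
    have uJ: "u \<in> J" using u sub by auto
    have ev: "eventually (\<lambda>h. u + h \<in> {s<..<t}) (at (0::real))" by (rule ev_in[OF u])
    have "((\<lambda>h. (1/h) *\<^sub>R (zf (u+h) - zf u)) \<longlongrightarrow> Z' u) (at 0 within UNIV)"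
      by (rule within_mono_ev[OF _ hgd[OF uJ]]) (use ev sub in \<open>auto elim!: eventually_mono\<close>)
    then have "((\<lambda>h. \<iota> ((1/h) *\<^sub>R (zf (u+h) - zf u))) \<longlongrightarrow> \<iota> (Z' u)) (at 0)"
      by (intro blinfun.tendsto[OF tendsto_const]) simp
    moreover have "eventually (\<lambda>h. \<iota> ((1/h) *\<^sub>R (zf (u+h) - zf u)) = (1/h) *\<^sub>R (W (u+h) - W u)) (at 0)"
      using ev proof eventually_elim
      case (elim h)
      then have "u + h \<in> J" using sub by auto
      then show ?case using Wz[OF uJ] Wz[of "u+h"] by (simp add: blinfun.scaleR_right blinfun.diff_right)
    qed
    ultimately show ?thesis unfolding g'eq by (rule Lim_transform_eventually)
  qed
  have DW: "(W has_vector_derivative gen' J G \<iota> u f) (at u)" if "s < u" "u < t" for u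
    using QW[OF that] by (rule vderiv_quot)
  have cW: "(W \<longlongrightarrow> W v) (at v within {s..t})" if v: "v \<in> {s..t}" for v
  proof -
    have vJ: "v \<in> J" using v sub by auto
    have "((\<lambda>h. h *\<^sub>R ((1/h) *\<^sub>R (zf (v+h) - zf v))) \<longlongrightarrow> 0 *\<^sub>R Z' v) (at 0 within {h. v + h \<in> J})"
      by (intro tendsto_intros hgd[OF vJ])
    moreover have "eventually (\<lambda>h. h *\<^sub>R ((1/h) *\<^sub>R (zf (v+h) - zf v)) = zf (v+h) - zf v) (at 0 within {h. v + h \<in> J})"
      by (auto simp: eventually_at_filter)
    ultimately have "((\<lambda>h. zf (v+h) - zf v) \<longlongrightarrow> 0) (at 0 within {h. v + h \<in> J})"
      using Lim_transform_eventually by fastforce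
    then have "((\<lambda>h. zf (v+h)) \<longlongrightarrow> zf v) (at 0 within {h. v + h \<in> J})"
      by (simp add: LIM_zero_iff)
    then have "(zf \<longlongrightarrow> zf v) (at v within J)" by (rule shift_within)
    then have "((\<lambda>x. \<iota> (zf x)) \<longlongrightarrow> \<iota> (zf v)) (at v within J)"
      by (intro blinfun.tendsto[OF tendsto_const])
    then have "((\<lambda>x. \<iota> (zf x)) \<longlongrightarrow> \<iota> (zf v)) (at v within {s..t})"
      by (rule tendsto_within_subset[OF _ sub])
    moreover have "eventually (\<lambda>x. \<iota> (zf x) = W x) (at v within {s..t})"
      unfolding eventually_at_filter using Wz sub by (intro always_eventually) auto
    ultimately show ?thesis using Wz[OF vJ] Lim_transform_eventually by fastforce
  qed
  obtain C where C: "C \<ge> 0" "\<forall>v\<in>{s..t}. norm (G s v) \<le> C" using UB[OF s t] by blast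
  define \<Phi> where "\<Phi> v = G s v (W v)" for v
  have c\<Phi>: "(\<Phi> \<longlongrightarrow> \<Phi> v) (at v within {s..t})" if v: "v \<in> {s..t}" for v
    unfolding \<Phi>_def
  proof (rule strong_tendsto[OF _ _ cW[OF v]])
    show "eventually (\<lambda>x. norm (G s x) \<le> C) (at v within {s..t})"
      using C by (auto simp: eventually_at_filter)
    show "((\<lambda>x. G s x (W v)) \<longlongrightarrow> G s v (W v)) (at v within {s..t})"
      using cont_G_on[OF s t] v by (simp add: continuous_on_def)
  qed
  define K where "K u = G s u (gen J G u (gen J G u f)) + (LBINT r:{s..u}. G s r (gen J G r (gen' J G \<iota> u f)))" for u
  have D\<Phi>: "(\<Phi> has_vector_derivative G s u (gen' J G \<iota> u f) + G s u (gen J G u (W u))) (at u)"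
    if u: "s < u" "u < t" for u
  proof (rule vderiv_quot)
    have uJ: "u \<in> J" using u sub by auto
    have ev: "eventually (\<lambda>h. u + h \<in> {s<..<t}) (at (0::real))" by (rule ev_in[OF u])
    have ic: "isCont (\<lambda>v. G s v y) u" for y
      using cont_G_on[OF s t] u by (intro continuous_on_interior) auto
    have T1: "((\<lambda>h. G s (u+h) ((1/h) *\<^sub>R (W (u+h) - W u))) \<longlongrightarrow> G s u (gen' J G \<iota> u f)) (at 0)"
    proof (rule strong_tendsto[OF _ _ QW[OF u]])
      show "eventually (\<lambda>h. norm (G s (u+h)) \<le> C) (at 0)"
        using ev by eventually_elim (use C in auto)
      have "((\<lambda>h. u + h) \<longlongrightarrow> u + 0) (at (0::real))" by (intro tendsto_intros)
      then show "((\<lambda>h. G s (u+h) (gen' J G \<iota> u f)) \<longlongrightarrow> G s u (gen' J G \<iota> u f)) (at 0)"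
        using isCont_tendsto_compose[OF ic] by simp
    qed
    have T2: "((\<lambda>h. (1/h) *\<^sub>R (G s (u+h) (W u) - G s u (W u))) \<longlongrightarrow> G s u (gen J G u (W u))) (at 0)"
      using quot_vderiv[OF deriv_G[OF s t u, of "zf u"]] by (simp add: Wz[OF uJ])
    have "((\<lambda>h. G s (u+h) ((1/h) *\<^sub>R (W (u+h) - W u)) + (1/h) *\<^sub>R (G s (u+h) (W u) - G s u (W u)))
        \<longlongrightarrow> G s u (gen' J G \<iota> u f) + G s u (gen J G u (W u))) (at 0)"
      by (rule tendsto_add[OF T1 T2])
    moreover have "G s (u+h) ((1/h) *\<^sub>R (W (u+h) - W u)) + (1/h) *\<^sub>R (G s (u+h) (W u) - G s u (W u))
        = (1/h) *\<^sub>R (\<Phi> (u+h) - \<Phi> u)" for h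
      by (simp add: \<Phi>_def blinfun.scaleR_right blinfun.diff_right algebra_simps)
    ultimately show "((\<lambda>h. (1/h) *\<^sub>R (\<Phi> (u+h) - \<Phi> u)) \<longlongrightarrow> G s u (gen' J G \<iota> u f) + G s u (gen J G u (W u))) (at 0)"
      by simp
  qed
  define F2 where "F2 v = \<Phi> v - W v" for v
  have DF2: "(F2 has_vector_derivative K u) (at u)" if u: "s < u" "u < t" for u
  proof -
    have uJ: "u \<in> J" using u sub by auto
    have "(F2 has_vector_derivative (G s u (gen' J G \<iota> u f) + G s u (gen J G u (W u))) - gen' J G \<iota> u f) (at u)"
      unfolding F2_def[abs_def] by (intro has_vector_derivative_diff D\<Phi>[OF u] DW[OF u])
    moreover have "(G s u (gen' J G \<iota> u f) + G s u (gen J G u (W u))) - gen' J G \<iota> u f = K u"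
    proof -
      have "G s u (gen' J G \<iota> u f) - gen' J G \<iota> u f = (LBINT r:{s..u}. G s r (gen J G r (gen' J G \<iota> u f)))"
        unfolding g'eq using u by (intro ftc_G[OF s uJ]) auto
      then show ?thesis by (simp add: K_def W_def algebra_simps)
    qed
    ultimately show ?thesis by simp
  qed
  have cF2: "continuous_on {s..t} F2"
    unfolding continuous_on_def F2_def using c\<Phi> cW by (auto intro: tendsto_diff)
  define P where "P v = (t - v) *\<^sub>R F2 v" for v
  have DP: "(P has_vector_derivative ((t - u) *\<^sub>R K u + (- 1) *\<^sub>R F2 u)) (at u)" if u: "s < u" "u < t" for u
    unfolding P_def[abs_def]
    by (rule has_vector_derivative_scaleR[OF _ DF2[OF u]]) (auto intro!: derivative_eq_intros)
  have cP: "continuous_on {s..t} P"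
    unfolding P_def[abs_def] by (intro continuous_intros cF2)
  have sJ: "s \<in> J" by (rule s)
  have Ps: "P s = 0" using G_id[OF sJ] by (simp add: P_def F2_def \<Phi>_def)
  have Pt: "P t = 0" by (simp add: P_def)
  have hk: "((\<lambda>u. (t - u) *\<^sub>R K u + (- 1) *\<^sub>R F2 u) has_integral (P t - P s)) {s..t}"
    by (rule fundamental_theorem_of_calculus_interior[OF st cP]) (use DP in auto)
  have I0: "set_integrable lborel {s..t} (\<lambda>u. G s u (gen J G u f))" unfolding z by (rule reg_int[OF s t st])
  have Ia: "set_integrable lborel {s..t} (\<lambda>u. gen J G u f)"
    unfolding z by (rule gen_int[OF s t st _ bdd L1]) (use rng z sub in \<open>auto\<close>)
  have IF2: "set_integrable lborel {s..t} F2"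
    unfolding F2_def[abs_def] \<Phi>_def W_def by (rule set_integral_diff(1)[OF I0 Ia])
  have IK: "set_integrable lborel {s..t} K"
    unfolding K_def[abs_def] by (rule set_integral_add(1)[OF I1 I2])
  have ItK: "set_integrable lborel {s..t} (\<lambda>u. (t - u) *\<^sub>R K u)" by (rule scale_int[OF IK st])
  have It1: "set_integrable lborel {s..t} (\<lambda>u. (t - u) *\<^sub>R G s u (gen J G u (gen J G u f)))" by (rule scale_int[OF I1 st])
  have It2: "set_integrable lborel {s..t} (\<lambda>u. (t - u) *\<^sub>R (LBINT r:{s..u}. G s r (gen J G r (gen' J G \<iota> u f))))"
    by (rule scale_int[OF I2 st])
  have IF2m: "set_integrable lborel {s..t} (\<lambda>u. (- 1) *\<^sub>R F2 u)" by (rule set_integrable_scaleR_right) (rule IF2)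
  have Isum: "set_integrable lborel {s..t} (\<lambda>u. (t - u) *\<^sub>R K u + (- 1) *\<^sub>R F2 u)"
    by (rule set_integral_add(1)[OF ItK IF2m])
  have "(LBINT u:{s..t}. (t - u) *\<^sub>R K u + (- 1) *\<^sub>R F2 u) = P t - P s"
    using has_integral_unique[OF bochner_hk[OF Isum] hk] .
  then have "(LBINT u:{s..t}. (t - u) *\<^sub>R K u) - (LBINT u:{s..t}. F2 u) = 0"
    using Ps Pt set_integral_add(2)[OF ItK IF2m] set_integral_uminus[OF IF2] by (simp add: algebra_simps)
  then have eq1: "(LBINT u:{s..t}. F2 u) = (LBINT u:{s..t}. (t - u) *\<^sub>R K u)" by simp
  have "(\<lambda>u. (t - u) *\<^sub>R K u) = (\<lambda>u. (t - u) *\<^sub>R G s u (gen J G u (gen J G u f))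
        + (t - u) *\<^sub>R (LBINT r:{s..u}. G s r (gen J G r (gen' J G \<iota> u f))))"
    by (simp add: fun_eq_iff K_def scaleR_add_right)
  then have eq2: "(LBINT u:{s..t}. (t - u) *\<^sub>R K u) = (LBINT u:{s..t}. (t - u) *\<^sub>R G s u (gen J G u (gen J G u f)))
      + (LBINT u:{s..t}. (t - u) *\<^sub>R (LBINT r:{s..u}. G s r (gen J G r (gen' J G \<iota> u f))))"
    using set_integral_add(2)[OF It1 It2] by simp
  have eq3: "(LBINT u:{s..t}. F2 u) = (LBINT u:{s..t}. G s u (gen J G u f)) - (LBINT u:{s..t}. gen J G u f)"
    unfolding F2_def \<Phi>_def W_def by (rule set_integral_diff(2)[OF I0 Ia])
  have eq4: "G s t f - f = (LBINT u:{s..t}. G s u (gen J G u f))" unfolding z by (rule ftc_G[OF s t st])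
  show ?thesis using eq1 eq2 eq3 eq4 by (simp add: algebra_simps)
qed

end

theorem theorem2p13:
  fixes G :: "real \<Rightarrow> real \<Rightarrow> ('y::{banach,second_countable_topology} \<Rightarrow>\<^sub>L 'y)"
    and \<iota> :: "'z::{banach,second_countable_topology} \<Rightarrow>\<^sub>L 'y"
    and J :: "real set" and s t :: real
  assumes J: "is_J J"
    and emb: "inj (blinfun_apply \<iota>)"
    and semi: "inhom_semigroup J G"
    and reg: "regular J G \<iota>"
    and st: "(s, t) \<in> Delta J"
    and bdd: "\<forall>u\<in>J. bounded_linear (\<lambda>z. gen J G u (blinfun_apply \<iota> z))"
    and L1: "set_integrable lborel {s..t} (\<lambda>u. onorm (\<lambda>z. gen J G u (blinfun_apply \<iota> z)))"
  shows "(\<forall>f\<in>dom_AY1 J G \<iota>.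
            blinfun_apply (G s t) f =
              f + (LBINT u:{s..t}. gen J G u f)
                + (LBINT u:{s..t}. LBINT r:{s..u}. blinfun_apply (G s r) (gen J G r (gen J G u f))))
       \<and> ((\<forall>z. continuous_on J (\<lambda>u. gen J G u (blinfun_apply \<iota> z))) \<longrightarrow>
           (\<forall>f\<in>dom_A' J G \<iota>.
              set_integrable lborel {s..t} (\<lambda>u. blinfun_apply (G s u) (gen J G u (gen J G u f))) \<longrightarrow>
              set_integrable lborel {s..t}
                (\<lambda>u. LBINT r:{s..u}. blinfun_apply (G s r) (gen J G r (gen' J G \<iota> u f))) \<longrightarrow>
              blinfun_apply (G s t) f =
                f + (LBINT u:{s..t}. gen J G u f)
                  + (LBINT u:{s..t}. (t - u) *\<^sub>R blinfun_apply (G s u) (gen J G u (gen J G u f)))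
                  + (LBINT u:{s..t}. (t - u) *\<^sub>R
                       (LBINT r:{s..u}. blinfun_apply (G s r) (gen J G r (gen' J G \<iota> u f))))))"
  proof -
  have s: "s \<in> J" and t: "t \<in> J" and st': "s \<le> t" using st by (auto simp: Delta_def)
  show ?thesis
  proof (intro conjI ballI impI allI)
    fix f assume "f \<in> dom_AY1 J G \<iota>"
    then show "G s t f = f + (LBINT u:{s..t}. gen J G u f)
                + (LBINT u:{s..t}. LBINT r:{s..u}. G s r (gen J G r (gen J G u f)))"
      by (rule part1[OF J emb semi reg s t st' bdd L1])
  next
    fix f assume f: "f \<in> dom_A' J G \<iota>"
      and I1: "set_integrable lborel {s..t} (\<lambda>u. G s u (gen J G u (gen J G u f)))"
      and I2: "set_integrable lborel {s..t} (\<lambda>u. LBINT r:{s..u}. G s r (gen J G r (gen' J G \<iota> u f)))"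
    show "G s t f = f + (LBINT u:{s..t}. gen J G u f)
                  + (LBINT u:{s..t}. (t - u) *\<^sub>R G s u (gen J G u (gen J G u f)))
                  + (LBINT u:{s..t}. (t - u) *\<^sub>R
                       (LBINT r:{s..u}. G s r (gen J G r (gen' J G \<iota> u f))))"
      by (rule part2[OF J emb semi reg s t st' bdd L1 f I1 I2])
  qed
qed

end
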